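(* Let $\beta = (\nu_{1}, \dots, \nu_{n}, \nu_{n}, \dots, \nu_{1}) \in \Lambda_{2n}$ have at least one negative part. Then $\mathrm{meas}(Kp^{\lambda}Kg_{\mu} \cap K'p^{\beta}K') = 0$, the measure being taken in $H$.
   Context: Let $p$ be an odd prime and $a$ prime to $p$ and not a square mod $p$. $G=Gl_{2n}(\mathbb{Q}_p)$, $K=Gl_{2n}(\mathbb{Z}_p)$, and $H\cong Gl_n(\mathbb{Q}_p(\sqrt a))$ is embedded in $G$ as $\{\left(\begin{smallmatrix} i & j\\ a w_n j w_n & w_n i w_n\end{smallmatrix}\right)\in G: i,j\in Gl_n(\mathbb{Q}_p)\}$, where $w_n$ is the $n\times n$ matrix with ones on the antidiagonal; $K'=K\cap H\cong Gl_n(\mathbb{Z}_p(\sqrt a))$. $\lambda$ is a partition with $l(\lambda)\le 2n$, $\mu$ a partition with $l(\mu)\le n$, $p^\lambda=\mathrm{diag}(p^{\lambda_1},\dots,p^{\lambda_{2n}})$ (similarly $p^\beta$), $g_\mu=\mathrm{diag}(1,\dots,1,p^{-\mu_n},\dots,p^{-\mu_1})$, and $\Lambda_{2n}=\{(\beta_1,\dots,\beta_{2n})\in\mathbb{Z}^{2n}:\beta_1\ge\cdots\ge\beta_{2n}\}$. The measure is the Haar measure on $H$ normalized so $K'$ has measure 1. *)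

theory Defs
  imports "HOL-Analysis.Analysis" "HOL-Number_Theory.Residues"
begin

text \<open>A complete discretely valued field of
characteristic 0 with value group p^Z, av(p) = 1/p and residue field F_p is
(uniquely up to isomorphism) the field of p-adic numbers.\<close>

definition is_Qp :: "nat \<Rightarrow> ('k::field_char_0 \<Rightarrow> real) \<Rightarrow> bool" where
  "is_Qp p av \<longleftrightarrow>
     prime p \<and>
     av 0 = 0 \<and>
     (\<forall>x. x \<noteq> 0 \<longrightarrow> (\<exists>k::int. av x = real p powi k)) \<and>
     (\<forall>x y. av (x * y) = av x * av y) \<and>
     (\<forall>x y. av (x + y) \<le> max (av x) (av y)) \<and>
     av (of_nat p) = 1 / real p \<and>
     (\<forall>x. av x \<le> 1 \<longrightarrow> (\<exists>i<p. av (x - of_nat i) < 1)) \<and>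
     (\<forall>s::nat \<Rightarrow> 'k. (\<forall>e>0. \<exists>N. \<forall>m\<ge>N. \<forall>n\<ge>N. av (s m - s n) < e) \<longrightarrow>
        (\<exists>l. \<forall>e>0. \<exists>N. \<forall>m\<ge>N. av (s m - l) < e))"

section \<open>N x N matrices as functions, zero outside the index range\<close>

type_synonym 'k mat = "nat \<Rightarrow> nat \<Rightarrow> 'k"

definition canon :: "nat \<Rightarrow> 'k::zero mat \<Rightarrow> bool" where
  "canon N A \<longleftrightarrow> (\<forall>i j. (N \<le> i \<or> N \<le> j) \<longrightarrow> A i j = 0)"

definition mmult :: "nat \<Rightarrow> 'k::comm_ring_1 mat \<Rightarrow> 'k mat \<Rightarrow> 'k mat" where
  "mmult N A B = (\<lambda>i j. if i < N \<and> j < N then (\<Sum>k<N. A i k * B k j) else 0)"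

definition mone :: "nat \<Rightarrow> 'k::comm_ring_1 mat" where
  "mone N = (\<lambda>i j. if i < N \<and> j = i then 1 else 0)"

definition diagm :: "nat \<Rightarrow> (nat \<Rightarrow> 'k::comm_ring_1) \<Rightarrow> 'k mat" where
  "diagm N d = (\<lambda>i j. if i < N \<and> j = i then d i else 0)"

definition GL :: "nat \<Rightarrow> 'k::comm_ring_1 mat set" where
  "GL N = {A. canon N A \<and> (\<exists>B. canon N B \<and> mmult N A B = mone N \<and> mmult N B A = mone N)}"

definition intmat :: "('k \<Rightarrow> real) \<Rightarrow> nat \<Rightarrow> 'k mat \<Rightarrow> bool" where
  "intmat av N A \<longleftrightarrow> (\<forall>i<N. \<forall>j<N. av (A i j) \<le> 1)"

definition GLint :: "('k::comm_ring_1 \<Rightarrow> real) \<Rightarrow> nat \<Rightarrow> 'k mat set" where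
  "GLint av N = {A. canon N A \<and> intmat av N A \<and>
      (\<exists>B. canon N B \<and> intmat av N B \<and> mmult N A B = mone N \<and> mmult N B A = mone N)}"

definition ppow :: "nat \<Rightarrow> nat \<Rightarrow> (nat \<Rightarrow> int) \<Rightarrow> 'k::field mat" where
  "ppow N p d = diagm N (\<lambda>i. of_nat p powi d i)"

text \<open>g_mu = diag(1,...,1,p^{-mu_n},...,p^{-mu_1}); mu is 0-indexed (mu 0 = mu_1)\<close>
definition gmu :: "nat \<Rightarrow> nat \<Rightarrow> (nat \<Rightarrow> nat) \<Rightarrow> 'k::field mat" where
  "gmu n p mu = diagm (2*n) (\<lambda>i. if i < n then 1 else of_nat p powi (- int (mu (n - 1 - (i - n)))))"

text \<open>The block matrix ((I, J), (a w J w, w I w)), w the n x n antidiagonal matrix\<close>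
definition blockH :: "nat \<Rightarrow> int \<Rightarrow> 'k::comm_ring_1 mat \<Rightarrow> 'k mat \<Rightarrow> 'k mat" where
  "blockH n a I J = (\<lambda>r c.
     if r < n \<and> c < n then I r c
     else if r < n \<and> c < 2*n then J r (c - n)
     else if r < 2*n \<and> c < n then of_int a * J (n - 1 - (r - n)) (n - 1 - c)
     else if r < 2*n \<and> c < 2*n then I (n - 1 - (r - n)) (n - 1 - (c - n))
     else 0)"

text \<open>H = GL_n(Q_p(sqrt a)) embedded in GL_{2n}(Q_p)\<close>
definition Hgrp :: "nat \<Rightarrow> int \<Rightarrow> 'k::comm_ring_1 mat set" where
  "Hgrp n a = {A \<in> GL (2*n). \<exists>I J. A = blockH n a I J}"

definition dcoset :: "nat \<Rightarrow> 'k::comm_ring_1 mat set \<Rightarrow> 'k mat \<Rightarrow> 'k mat \<Rightarrow> 'k mat set" where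
  "dcoset N K D E = {mmult N (mmult N (mmult N k1 D) k2) E | k1 k2. k1 \<in> K \<and> k2 \<in> K}"

definition mopen :: "('k::ab_group_add \<Rightarrow> real) \<Rightarrow> nat \<Rightarrow> 'k mat set \<Rightarrow> 'k mat set \<Rightarrow> bool" where
  "mopen av N S U \<longleftrightarrow> U \<subseteq> S \<and>
     (\<forall>A\<in>U. \<exists>e>0. \<forall>B\<in>S. (\<forall>i<N. \<forall>j<N. av (B i j - A i j) < e) \<longrightarrow> B \<in> U)"

text \<open>M is a left Haar measure on the Borel sets of S, normalised so Kc has measure 1.
(S is second countable and locally compact, so these conditions determine M.)\<close>
definition is_haar :: "('k::comm_ring_1 \<Rightarrow> real) \<Rightarrow> nat \<Rightarrow> 'k mat set \<Rightarrow> 'k mat set \<Rightarrow> 'k mat measure \<Rightarrow> bool" where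
  "is_haar av N S Kc M \<longleftrightarrow>
     space M = S \<and>
     sets M = sigma_sets S {U. mopen av N S U} \<and>
     (\<forall>g\<in>S. \<forall>X\<in>sets M. emeasure M ((\<lambda>B. mmult N g B) ` X) = emeasure M X) \<and>
     emeasure M Kc = 1"

end

theory Submission
  imports Defs
begin

locale avl =
  fixes av :: "'k::field_char_0 \<Rightarrow> real" and p :: nat
  assumes Qp: "is_Qp p av"
begin

lemma pr: "prime p" using Qp by (simp add: is_Qp_def)
lemma p2: "p \<ge> 2" using pr prime_ge_2_nat by blast
lemma mult: "av (x*y) = av x * av y" using Qp by (simp add: is_Qp_def)
lemma ultra: "av (x+y) \<le> max (av x) (av y)" using Qp by (simp add: is_Qp_def)
lemma av0: "av 0 = 0" using Qp by (simp add: is_Qp_def)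
lemma avp: "av (of_nat p) = 1 / real p" using Qp by (simp add: is_Qp_def)
lemma nonneg: "av x \<ge> 0"
proof (cases "x = 0")
  case True then show ?thesis by (simp add: av0)
next
  case False
  then obtain k::int where "av x = real p powi k" using Qp by (auto simp: is_Qp_def)
  then show ?thesis using p2 by simp
qed
lemma pos: "x \<noteq> 0 \<Longrightarrow> av x > 0"
proof -
  assume "x \<noteq> 0"
  then obtain k::int where "av x = real p powi k" using Qp by (auto simp: is_Qp_def)
  then show ?thesis using p2 by simp
qed
lemma av1: "av 1 = 1"
proof -
  have "av 1 = av 1 * av 1" using mult[of 1 1] by simp
  moreover have "av 1 > 0" using pos[of 1] by simp
  ultimately show ?thesis by simp
qed
lemma avm1: "av (-1) = 1"
proof -
  have "av (-1) * av (-1) = 1" using mult[of "-1" "-1"] av1 by simp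
  then show ?thesis using nonneg[of "-1"]
    by (metis abs_of_nonneg mult_eq_1 real_sqrt_abs real_sqrt_one power2_eq_square) 
qed
lemma avneg: "av (-x) = av x" using mult[of "-1" x] avm1 by simp
lemma avnat: "av (of_nat m) \<le> 1"
proof (induction m)
  case 0 then show ?case by (simp add: av0)
next
  case (Suc m)
  have "av (of_nat m + 1) \<le> max (av (of_nat m)) (av 1)" by (rule ultra)
  then show ?case using Suc av1 by (simp add: add.commute)
qed
lemma avint: "av (of_int m) \<le> 1"
proof (cases "m \<ge> 0")
  case True then show ?thesis using avnat[of "nat m"] by simp
next
  case False
  then have "of_int m = - (of_nat (nat (-m)) :: 'k)" by simp
  then show ?thesis using avnat[of "nat (-m)"] avneg by simp
qed
lemma avunit: assumes "coprime a (int p)" shows "av (of_int a) = 1"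
proof -
  obtain u v where uv: "u * a + v * int p = 1" using bezout_int[of a "int p"] assms by auto
  have "1 = av (of_int (u * a + v * int p))" using uv av1 by simp
  also have "\<dots> = av (of_int u * of_int a + of_int v * of_nat p)" by simp
  also have "\<dots> \<le> max (av (of_int u * of_int a)) (av (of_int v * of_nat p))" by (rule ultra)
  also have "\<dots> = max (av (of_int u) * av (of_int a)) (av (of_int v) * (1 / real p))" by (simp add: mult avp)
  finally have h: "1 \<le> max (av (of_int u) * av (of_int a)) (av (of_int v) * (1 / real p))" .
  have "av (of_int v) * (1 / real p) < 1"
  proof -
    have "av (of_int v) * (1 / real p) \<le> 1 * (1/real p)"
      using avint[of v] p2 by (intro mult_right_mono) auto
    also have "\<dots> < 1" using p2 by simp
    finally show ?thesis .
  qed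
  with h have "1 \<le> av (of_int u) * av (of_int a)" by linarith
  moreover have "av (of_int u) * av (of_int a) \<le> av (of_int a)"
    using avint[of u] nonneg[of "of_int a"] nonneg[of "of_int u"] by (simp add: mult_left_le_one_le)
  ultimately show ?thesis using avint[of a] by linarith
qed
lemma avsum: "finite S \<Longrightarrow> (\<And>k. k \<in> S \<Longrightarrow> av (f k) \<le> 1) \<Longrightarrow> av (sum f S) \<le> 1"
proof (induction S rule: finite_induct)
  case empty then show ?case by (simp add: av0)
next
  case (insert x F)
  then have "av (f x) \<le> 1" "av (sum f F) \<le> 1" by auto
  then have "max (av (f x)) (av (sum f F)) \<le> 1" by simp
  moreover have "av (sum f (insert x F)) = av (f x + sum f F)" using insert.hyps by simp
  ultimately show ?case using ultra[of "f x" "sum f F"] by linarith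
qed
lemma avpow: "av (x ^ m) = av x ^ m"
  by (induction m) (auto simp: av1 mult)
lemma avinv: "x \<noteq> 0 \<Longrightarrow> av (inverse x) = inverse (av x)"
  using mult[of x "inverse x"] av1 pos[of x] by (simp add: field_simps)
lemma avpneg: assumes "k < 0" shows "av (of_nat p powi k :: 'k) > 1"
proof -
  have "(of_nat p :: 'k) powi k = inverse (of_nat p) ^ nat (-k)" using assms by (simp add: power_int_def)
  then have "av (of_nat p powi k :: 'k) = real p ^ nat (-k)"
    using p2 by (simp add: avpow avinv avp)
  moreover have "1 < real p ^ nat (-k)" using p2 assms
    by (intro one_less_power) auto
  ultimately show ?thesis by simp
qed
lemma avppos: "av (of_nat p powi int m :: 'k) \<le> 1"
proof -
  have "av (of_nat p powi int m :: 'k) = (1 / real p) ^ m" by (simp add: avpow avp)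
  also have "\<dots> \<le> 1" using p2 by (simp add: power_le_one)
  finally show ?thesis .
qed
end

lemma sdelta1: "j < (N::nat) \<Longrightarrow> (\<Sum>k<N. (A k :: 'a::comm_ring_1) * (if j = k then c k else 0)) = A j * c j"
proof -
  assume j: "j < N"
  have "(\<Sum>k<N. A k * (if j = k then c k else 0)) = (\<Sum>k<N. if k = j then A k * c k else 0)"
    by (rule sum.cong) auto
  also have "\<dots> = (if j \<in> {..<N} then A j * c j else 0)" by (rule sum.delta) simp
  finally show ?thesis using j by simp
qed

lemma sdelta2: "i < (N::nat) \<Longrightarrow> (\<Sum>k<N. (if k = i then 1 else 0) * (A k :: 'a::comm_ring_1)) = A i"
proof -
  assume j: "i < N"
  have "(\<Sum>k<N. (if k = i then 1 else 0) * A k) = (\<Sum>k<N. if k = i then A k else 0)"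
    by (rule sum.cong) auto
  also have "\<dots> = (if i \<in> {..<N} then A i else 0)" by (rule sum.delta) simp
  finally show ?thesis using j by simp
qed

lemma mmult_assoc:
  "mmult N (mmult N A B) C = mmult N A (mmult N B C)"
proof (intro ext)
  fix i j
  show "mmult N (mmult N A B) C i j = mmult N A (mmult N B C) i j"
  proof (cases "i < N \<and> j < N")
    case True
    have "mmult N (mmult N A B) C i j = (\<Sum>k<N. (\<Sum>l<N. A i l * B l k) * C k j)"
      using True by (simp add: mmult_def)
    also have "\<dots> = (\<Sum>k<N. \<Sum>l<N. A i l * B l k * C k j)" by (simp add: sum_distrib_right)
    also have "\<dots> = (\<Sum>l<N. \<Sum>k<N. A i l * B l k * C k j)" by (rule sum.swap)
    also have "\<dots> = (\<Sum>l<N. A i l * (\<Sum>k<N. B l k * C k j))"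
      by (simp add: sum_distrib_left mult.assoc)
    also have "\<dots> = mmult N A (mmult N B C) i j" using True by (simp add: mmult_def)
    finally show ?thesis .
  qed (auto simp: mmult_def)
qed

lemma canon_mmult: "canon N (mmult N A B)" by (auto simp: canon_def mmult_def)

lemma mmult_mone: "canon N A \<Longrightarrow> mmult N A (mone N) = A"
proof (intro ext)
  fix i j assume c: "canon N A"
  show "mmult N A (mone N) i j = A i j"
  proof (cases "i < N \<and> j < N")
    case True
    have "mmult N A (mone N) i j = (\<Sum>k<N. A i k * (if j = k then 1 else 0))"
      using True by (auto simp: mmult_def mone_def intro!: sum.cong)
    then show ?thesis using sdelta1[OF conjunct2[OF True], of "A i" "\<lambda>_. 1"] by simp
  qed (use c in \<open>auto simp: mmult_def canon_def\<close>)
qed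

lemma mone_mmult: "canon N A \<Longrightarrow> mmult N (mone N) A = A"
proof (intro ext)
  fix i j assume c: "canon N A"
  show "mmult N (mone N) A i j = A i j"
  proof (cases "i < N \<and> j < N")
    case True
    have "mmult N (mone N) A i j = (\<Sum>k<N. (if k = i then 1 else 0) * A k j)"
      using True by (auto simp: mmult_def mone_def intro!: sum.cong)
    then show ?thesis using sdelta2[OF conjunct1[OF True], of "\<lambda>k. A k j"] by simp
  qed (use c in \<open>auto simp: mmult_def canon_def\<close>)
qed

lemma mmult_diagm: "i < N \<Longrightarrow> j < N \<Longrightarrow> mmult N A (diagm N d) i j = A i j * d j"
proof -
  assume a: "i < N" "j < N"
  have "mmult N A (diagm N d) i j = (\<Sum>k<N. A i k * (if j = k then d k else 0))"
    using a by (auto simp: mmult_def diagm_def intro!: sum.cong)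
  then show ?thesis using sdelta1[OF a(2), of "A i" d] by simp
qed

context avl begin
lemma intmat_mmult: "intmat av N A \<Longrightarrow> intmat av N B \<Longrightarrow> intmat av N (mmult N A B)"
  unfolding intmat_def mmult_def
proof (intro allI impI)
  fix i j assume A: "\<forall>i<N. \<forall>j<N. av (A i j) \<le> 1" and B: "\<forall>i<N. \<forall>j<N. av (B i j) \<le> 1"
    and ij: "i < N" "j < N"
  have "av (\<Sum>k<N. A i k * B k j) \<le> 1"
  proof (rule avsum)
    fix k assume "k \<in> {..<N}"
    then have "av (A i k) \<le> 1" "av (B k j) \<le> 1" using A B ij by auto
    then show "av (A i k * B k j) \<le> 1" using nonneg[of "B k j"]
      by (simp add: mult mult_le_one)
  qed simp
  then show "av (if i < N \<and> j < N then \<Sum>k<N. A i k * B k j else 0) \<le> 1" using ij by simp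
qed
end

definition tt :: "nat \<Rightarrow> int \<Rightarrow> nat \<Rightarrow> 'k::comm_ring_1" where
  "tt n a r = (if r < n then 1 else of_int a)"

definition Qsym :: "nat \<Rightarrow> int \<Rightarrow> 'k::comm_ring_1 mat \<Rightarrow> bool" where
  "Qsym n a X \<longleftrightarrow> (\<forall>r<2*n. \<forall>c<2*n. tt n a r * X (2*n-1-r) (2*n-1-c) = tt n a c * X r c)"

lemma Qsym_blockH: "Qsym n a (blockH n a I J)"
  unfolding Qsym_def tt_def blockH_def
proof (intro allI impI)
  fix r c assume rc: "r < 2*n" "c < 2*n"
  consider "r < n" "c < n" | "r < n" "\<not> c < n" | "\<not> r < n" "c < n" | "\<not> r < n" "\<not> c < n" by blast
  then show "(if r < n then 1 else of_int a) *
         (if 2 * n - 1 - r < n \<and> 2 * n - 1 - c < n then I (2 * n - 1 - r) (2 * n - 1 - c)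
          else if 2 * n - 1 - r < n \<and> 2 * n - 1 - c < 2 * n then J (2 * n - 1 - r) (2 * n - 1 - c - n)
               else if 2 * n - 1 - r < 2 * n \<and> 2 * n - 1 - c < n
                    then of_int a * J (n - 1 - (2 * n - 1 - r - n)) (n - 1 - (2 * n - 1 - c))
                    else if 2 * n - 1 - r < 2 * n \<and> 2 * n - 1 - c < 2 * n
                         then I (n - 1 - (2 * n - 1 - r - n)) (n - 1 - (2 * n - 1 - c - n)) else 0) =
         (if c < n then 1 else of_int a) *
         (if r < n \<and> c < n then I r c
          else if r < n \<and> c < 2 * n then J r (c - n)
               else if r < 2 * n \<and> c < n then of_int a * J (n - 1 - (r - n)) (n - 1 - c)
                    else if r < 2 * n \<and> c < 2 * n then I (n - 1 - (r - n)) (n - 1 - (c - n)) else 0)"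
  proof cases
    case 1
    then have "n - 1 - (2 * n - 1 - r - n) = r" "n - 1 - (2 * n - 1 - c - n) = c" by auto
    with 1 rc show ?thesis by auto
  next
    case 2
    then have "n - 1 - (2 * n - 1 - r - n) = r" "n - 1 - (2 * n - 1 - c) = c - n" using rc by auto
    with 2 rc show ?thesis by auto
  next
    case 3
    then have "n - 1 - (r - n) = 2*n-1-r" "2 * n - 1 - c - n = n - 1 - c" by auto
    with 3 rc show ?thesis by auto
  next
    case 4
    then have "n - 1 - (r - n) = 2*n-1-r" "n - 1 - (c - n) = 2 * n - 1 - c" by auto
    with 4 rc show ?thesis by auto
  qed
qed

lemma Qsym_mmult: assumes X: "Qsym n a X" and Y: "Qsym n a Y" shows "Qsym n a (mmult (2*n) X Y)"
  unfolding Qsym_def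
proof (intro allI impI)
  fix r c assume rc: "r < 2*n" "c < 2*n"
  let ?N = "2*n" let ?s = "\<lambda>k. 2*n-1-k"
  have "tt n a r * mmult ?N X Y (?s r) (?s c) = (\<Sum>k<?N. tt n a r * X (?s r) k * Y k (?s c))"
    using rc by (simp add: mmult_def sum_distrib_left mult.assoc)
  also have "\<dots> = (\<Sum>k<?N. tt n a r * X (?s r) (?s k) * Y (?s k) (?s c))"
    using sum.nat_diff_reindex[where g = "\<lambda>k. tt n a r * X (?s r) k * Y k (?s c)" and n = "2*n"] by simp
  also have "\<dots> = (\<Sum>k<?N. X r k * (tt n a k * Y (?s k) (?s c)))"
  proof (rule sum.cong)
    fix k assume "k \<in> {..<?N}"
    then have "tt n a r * X (?s r) (?s k) = tt n a k * X r k" using X rc by (simp add: Qsym_def)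
    then show "tt n a r * X (?s r) (?s k) * Y (?s k) (?s c) = X r k * (tt n a k * Y (?s k) (?s c))"
      by (simp add: algebra_simps)
  qed simp
  also have "\<dots> = (\<Sum>k<?N. X r k * (tt n a c * Y k c))"
  proof (rule sum.cong)
    fix k assume "k \<in> {..<?N}"
    then show "X r k * (tt n a k * Y (?s k) (?s c)) = X r k * (tt n a c * Y k c)"
      using Y rc by (simp add: Qsym_def)
  qed simp
  also have "\<dots> = tt n a c * mmult ?N X Y r c"
    using rc by (simp add: mmult_def sum_distrib_left algebra_simps)
  finally show "tt n a r * mmult ?N X Y (?s r) (?s c) = tt n a c * mmult ?N X Y r c" .
qed

lemma Qsym_ppow: assumes bs: "\<forall>i<n. beta (2*n - 1 - i) = beta i"
  shows "Qsym n a (ppow (2*n) p beta :: 'k::field mat)"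
  unfolding Qsym_def ppow_def diagm_def
proof (intro allI impI)
  fix r c assume rc: "r < 2*n" "c < 2*n"
  have b: "beta (2*n-1-r) = beta r"
  proof (cases "r < n")
    case True then show ?thesis using bs by simp
  next
    case False
    then have "2*n-1-r < n" "2*n-1-(2*n-1-r) = r" using rc by auto
    then show ?thesis using bs by metis
  qed
  have e: "(2*n-1-c = 2*n-1-r) = (c = r)" using rc by auto
  show "tt n a r * (if 2*n-1-r < 2*n \<and> 2*n-1-c = 2*n-1-r then (of_nat p :: 'k) powi beta (2*n-1-r) else 0) =
        tt n a c * (if r < 2*n \<and> c = r then of_nat p powi beta r else 0)"
    using rc e b by auto
qed

theorem lemma4p1:
  fixes p :: nat and av :: "'k::field_char_0 \<Rightarrow> real" and a :: int and n :: nat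
    and lam :: "nat \<Rightarrow> nat" and mu :: "nat \<Rightarrow> nat" and beta :: "nat \<Rightarrow> int"
    and M :: "'k mat measure"
  assumes Qp: "is_Qp p av"
    and odd: "odd p"
    and a_coprime: "coprime a (int p)"
    and a_nonsq: "\<not> QuadRes (int p) a"
    and lam_part: "\<forall>i j. i \<le> j \<longrightarrow> j < 2*n \<longrightarrow> lam j \<le> lam i"
    and mu_part: "\<forall>i j. i \<le> j \<longrightarrow> j < n \<longrightarrow> mu j \<le> mu i"
    and beta_dom: "\<forall>i j. i \<le> j \<longrightarrow> j < 2*n \<longrightarrow> beta j \<le> beta i"
    and beta_sym: "\<forall>i<n. beta (2*n - 1 - i) = beta i"
    and beta_neg: "\<exists>i<2*n. beta i < 0"
    and haar: "is_haar av (2*n) (Hgrp n a) (GLint av (2*n) \<inter> Hgrp n a) M"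
  shows "dcoset (2*n) (GLint av (2*n)) (ppow (2*n) p (\<lambda>i. int (lam i))) (gmu n p mu)
           \<inter> dcoset (2*n) (GLint av (2*n) \<inter> Hgrp n a) (ppow (2*n) p beta) (mone (2*n)) \<in> sets M
       \<and> emeasure M (dcoset (2*n) (GLint av (2*n)) (ppow (2*n) p (\<lambda>i. int (lam i))) (gmu n p mu)
           \<inter> dcoset (2*n) (GLint av (2*n) \<inter> Hgrp n a) (ppow (2*n) p beta) (mone (2*n))) = 0"
proof -
  interpret avl av p using Qp by (unfold_locales)
  define N where "N = 2*n"
  define P :: "'k mat" where "P = ppow N p (\<lambda>i. int (lam i))"
  define G :: "'k mat" where "G = gmu n p mu"
  define B :: "'k mat" where "B = ppow N p beta"
  have empty: "dcoset N (GLint av N) P G \<inter> dcoset N (GLint av N \<inter> Hgrp n a) B (mone N) = {}"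
  proof (rule ccontr)
    assume "\<not> ?thesis"
    then obtain x where x1: "x \<in> dcoset N (GLint av N) P G"
      and x2: "x \<in> dcoset N (GLint av N \<inter> Hgrp n a) B (mone N)" by blast
    obtain k1 k2 where k: "k1 \<in> GLint av N" "k2 \<in> GLint av N"
      and xk: "x = mmult N (mmult N (mmult N k1 P) k2) G"
      using x1 unfolding dcoset_def by blast
    define y where "y = mmult N (mmult N k1 P) k2"
    have intP: "intmat av N P"
      unfolding intmat_def P_def ppow_def diagm_def using avppos by (auto simp: av0)
    have inty: "intmat av N y" unfolding y_def
      using k intP by (intro intmat_mmult) (auto simp: GLint_def)
    have col: "av (x i j) \<le> 1" if "i < N" "j < n" for i j
    proof -
      have "x i j = y i j * (if j < n then 1 else of_nat p powi (- int (mu (n - 1 - (j - n)))))"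
        using that unfolding xk G_def gmu_def y_def N_def by (subst mmult_diagm) auto
      then have "x i j = y i j" using that by simp
      then show ?thesis using inty that unfolding intmat_def N_def by auto
    qed
    obtain h1 h2 where h: "h1 \<in> GLint av N \<inter> Hgrp n a" "h2 \<in> GLint av N \<inter> Hgrp n a"
      and xh': "x = mmult N (mmult N (mmult N h1 B) h2) (mone N)"
      using x2 unfolding dcoset_def by blast
    have xh: "x = mmult N (mmult N h1 B) h2" using xh' by (simp add: mmult_mone canon_mmult)
    have Qh: "Qsym n a h1" "Qsym n a h2" using h Qsym_blockH unfolding Hgrp_def by auto
    have QB: "Qsym n a B" unfolding B_def N_def using Qsym_ppow beta_sym by blast
    have Qx: "Qsym n a x" unfolding xh N_def using Qh QB by (intro Qsym_mmult)
    have ua: "av (of_int a) = 1" using avunit a_coprime by blast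
    have intx: "intmat av N x" unfolding intmat_def
    proof (intro allI impI)
      fix r c assume rc: "r < N" "c < N"
      show "av (x r c) \<le> 1"
      proof (cases "c < n")
        case True then show ?thesis using col rc by simp
      next
        case False
        have "tt n a r * x (2*n-1-r) (2*n-1-c) = tt n a c * x r c"
          using Qx rc unfolding Qsym_def N_def by blast
        then have "av (tt n a r * x (2*n-1-r) (2*n-1-c)) = av (x r c)"
          using False ua by (simp add: tt_def mult)
        moreover have "av (tt n a r :: 'k) \<le> 1" using ua av1 by (simp add: tt_def)
        moreover have "av (x (2*n-1-r) (2*n-1-c)) \<le> 1" using col rc False unfolding N_def by auto
        ultimately show ?thesis using nonneg[of "tt n a r"] nonneg[of "x (2*n-1-r) (2*n-1-c)"]
          by (metis mult mult_le_one)
      qed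
    qed
    obtain u1 where u1: "canon N u1" "intmat av N u1" "mmult N u1 h1 = mone N"
      using h(1) unfolding GLint_def by blast
    obtain u2 where u2: "canon N u2" "intmat av N u2" "mmult N h2 u2 = mone N"
      using h(2) unfolding GLint_def by blast
    have cB: "canon N B" unfolding B_def ppow_def diagm_def canon_def by auto
    have "mmult N (mmult N u1 x) u2 = mmult N (mmult N (mmult N (mmult N u1 h1) B) h2) u2"
      unfolding xh by (simp add: mmult_assoc)
    also have "\<dots> = B" using u1 u2 cB by (simp add: mmult_assoc mone_mmult mmult_mone)
    finally have "intmat av N B" using intmat_mmult u1 u2 intx by metis
    moreover obtain i where i: "i < 2*n" "beta i < 0" using beta_neg by blast
    ultimately have "av (B i i) \<le> 1" unfolding intmat_def N_def by blast
    moreover have "B i i = of_nat p powi beta i" using i unfolding B_def ppow_def diagm_def N_def by simp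
    ultimately show False using avpneg[OF i(2)] by simp
  qed
  show ?thesis using empty unfolding N_def P_def G_def B_def by simp
qed

end
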